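(* Let $K\in\mathbb N$, $p_1,\dots,p_K>0$ with $\sum_{k=1}^K p_k=1$, and $\sigma_1^2,\dots,\sigma_K^2>0$. Let $h\in\mathbb C$ be distributed as $h\sim\sum_{k=1}^K p_k\mathcal N_{\mathbb C}(0,\sigma_k^2)$, let $n\sim\mathcal N_{\mathbb C}(0,\eta^2)$ with $\eta^2>0$ be independent of $h$, and let $r=Q(h+n)$ where $Q(x)=\frac1{\sqrt2}(\operatorname{sign}(\operatorname{Re}x)+\mathrm j\operatorname{sign}(\operatorname{Im}x))$. Then the conditional mean estimator is $$\mathbb E[h\mid r]=\sqrt{\tfrac{2}{\pi}}\sum_{k=1}^K p_k\frac{\sigma_k^2}{\sqrt{\sigma_k^2+\eta^2}}\,r.$$
   Context: $\mathcal N_{\mathbb C}(0,\sigma^2)$ denotes the circularly symmetric complex Gaussian distribution with variance $\sigma^2$. *)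

theory Defs
  imports "HOL-Probability.Probability"
begin

definition Qb :: "complex \<Rightarrow> complex" where
  "Qb x = Complex (sgn (Re x)) (sgn (Im x)) / complex_of_real (sqrt 2)"

text \<open>Density (w.r.t. Lebesgue measure on C = R^2) of the circularly symmetric
  complex Gaussian N_C(0, s2).\<close>
definition cgauss_density :: "real \<Rightarrow> complex \<Rightarrow> real" where
  "cgauss_density s2 z = exp (- (cmod z)\<^sup>2 / s2) / (pi * s2)"

definition complex_cond_exp ::
  "'a measure \<Rightarrow> 'a measure \<Rightarrow> ('a \<Rightarrow> complex) \<Rightarrow> 'a \<Rightarrow> complex" where
  "complex_cond_exp M F f x =
     Complex (real_cond_exp M F (\<lambda>y. Re (f y)) x) (real_cond_exp M F (\<lambda>y. Im (f y)) x)"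

end

theory Submission
  imports Defs "HOL-Real_Asymp.Real_Asymp"
begin


definition phi :: "real \<Rightarrow> real \<Rightarrow> real" where
  "phi s x = exp (- x\<^sup>2 / s) / sqrt (pi * s)"

lemma phi_nd: "s > 0 \<Longrightarrow> phi s = normal_density 0 (sqrt (s/2))"
  by (auto simp: phi_def normal_density_def fun_eq_iff)

lemma phi_nonneg[simp]: "s > 0 \<Longrightarrow> 0 \<le> phi s x"
  by (simp add: phi_def)

lemma phi_even: "phi s (- x) = phi s x"
  by (simp add: phi_def)

lemma phi_measurable[measurable]: "phi s \<in> borel_measurable borel"
  unfolding phi_def by measurable

lemma phi_integrable[simp]: "s > 0 \<Longrightarrow> integrable lborel (phi s)"
  by (simp add: phi_nd)

lemma phi_integral[simp]: "s > 0 \<Longrightarrow> (\<integral>x. phi s x \<partial>lborel) = 1"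
  by (simp add: phi_nd)

lemma phi_integrable_x: "s > 0 \<Longrightarrow> integrable lborel (\<lambda>x. phi s x * x)"
  using integrable_normal_moment_nz_1 by (simp add: phi_nd)

lemma phi_integral_x: "s > 0 \<Longrightarrow> (\<integral>x. phi s x * x \<partial>lborel) = 0"
  using integral_normal_moment_nz_1 by (simp add: phi_nd)

lemma cgauss_phi: "s > 0 \<Longrightarrow> cgauss_density s z = phi s (Re z) * phi s (Im z)"
proof -
  assume s: "s > 0"
  have "(cmod z)\<^sup>2 = (Re z)\<^sup>2 + (Im z)\<^sup>2" by (simp add: cmod_power2)
  moreover have "sqrt (pi * s) * sqrt (pi * s) = pi * s" using s by simp
  ultimately show ?thesis
    unfolding cgauss_density_def phi_def
    by (simp add: exp_add[symmetric] add_divide_distrib diff_divide_distrib)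
qed

lemma phi_deriv: "s > 0 \<Longrightarrow> ((\<lambda>x. - (s/2) * phi s x) has_real_derivative (x * phi s x)) (at x)"
  unfolding phi_def
  by (auto intro!: derivative_eq_intros simp: field_simps power2_eq_square)

lemma phi_lim_top: "s > 0 \<Longrightarrow> ((\<lambda>x. - (s/2) * phi s x) \<longlongrightarrow> 0) at_top"
  unfolding phi_def by real_asymp



lemma phi_tail:
  assumes s: "s > 0"
  shows "integrable lborel (\<lambda>x. indicator {t<..} x * (x * phi s x))"
    "(\<integral>x. indicator {t<..} x * (x * phi s x) \<partial>lborel) = s/2 * phi s t"
proof -
  have int: "integrable lborel (\<lambda>x. x * phi s x)"
    using phi_integrable_x[OF s] by (simp add: mult.commute)
  show I: "integrable lborel (\<lambda>x. indicator {t<..} x * (x * phi s x))"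
    using integrable_mult_indicator[OF _ int, of "{t<..}"] by simp
  have e: "einterval (ereal t) \<infinity> = {t<..}" by (auto simp: einterval_def)
  have "(LBINT x=ereal t..\<infinity>. x * phi s x) = 0 - (- (s/2) * phi s t)"
  proof (rule interval_integral_FTC_integrable[where F="\<lambda>x. - (s/2) * phi s x"])
    show "ereal t < \<infinity>" by simp
    show "((\<lambda>x. - (s/2) * phi s x) has_vector_derivative x * phi s x) (at x)" for x
      using phi_deriv[OF s, of x] by (simp add: has_real_derivative_iff_has_vector_derivative)
    show "isCont (\<lambda>x. x * phi s x) x" for x
      unfolding phi_def using s by (intro continuous_intros) auto
    show "set_integrable lborel (einterval (ereal t) \<infinity>) (\<lambda>x. x * phi s x)"
      unfolding e set_integrable_def using I by simp
    show "(((\<lambda>x. - (s/2) * phi s x) \<circ> real_of_ereal) \<longlongrightarrow> - (s/2) * phi s t) (at_right (ereal t))"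
      unfolding ereal_tendsto_simps
      by (intro tendsto_within_subset[OF DERIV_isCont[OF phi_deriv[OF s], unfolded isCont_def]]) auto
    show "(((\<lambda>x. - (s/2) * phi s x) \<circ> real_of_ereal) \<longlongrightarrow> 0) (at_left \<infinity>)"
      unfolding ereal_tendsto_simps using phi_lim_top[OF s] .
  qed
  then show "(\<integral>x. indicator {t<..} x * (x * phi s x) \<partial>lborel) = s/2 * phi s t"
    by (simp add: interval_lebesgue_integral_def set_lebesgue_integral_def e)
qed



lemma prod_integral:
  fixes f :: "'a \<Rightarrow> real" and g :: "'b \<Rightarrow> real"
  assumes M1: "sigma_finite_measure M1" and M2: "sigma_finite_measure M2"
    and f: "integrable M1 f" and g: "integrable M2 g"
  shows "integrable (M1 \<Otimes>\<^sub>M M2) (\<lambda>(x,y). f x * g y)"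
    "(\<integral>z. (case z of (x,y) \<Rightarrow> f x * g y) \<partial>(M1 \<Otimes>\<^sub>M M2)) = integral\<^sup>L M1 f * integral\<^sup>L M2 g"
proof -
  interpret pair_sigma_finite M1 M2 using M1 M2 by (simp add: pair_sigma_finite_def)
  have [measurable]: "f \<in> borel_measurable M1" "g \<in> borel_measurable M2" using f g by auto
  show I: "integrable (M1 \<Otimes>\<^sub>M M2) (\<lambda>(x,y). f x * g y)"
  proof (rule Fubini_integrable)
    show "(\<lambda>(x,y). f x * g y) \<in> borel_measurable (M1 \<Otimes>\<^sub>M M2)" by measurable
    have "integrable M1 (\<lambda>x. norm (f x) * (\<integral>y. norm (g y) \<partial>M2))"
      using f by (intro integrable_mult_left) auto
    then show "integrable M1 (\<lambda>x. \<integral>y. norm (case (x, y) of (x, y) \<Rightarrow> f x * g y) \<partial>M2)"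
      by (simp add: abs_mult)
    show "AE x in M1. integrable M2 (\<lambda>y. case (x, y) of (x, y) \<Rightarrow> f x * g y)"
      using g by auto
  qed
  have "(\<integral>z. (case z of (x,y) \<Rightarrow> f x * g y) \<partial>(M1 \<Otimes>\<^sub>M M2)) = (\<integral>x. (\<integral>y. f x * g y \<partial>M2) \<partial>M1)"
    using integral_fst'[OF I] by simp
  also have "\<dots> = (\<integral>x. f x * integral\<^sup>L M2 g \<partial>M1)" by simp
  also have "\<dots> = integral\<^sup>L M1 f * integral\<^sup>L M2 g" by simp
  finally show "(\<integral>z. (case z of (x,y) \<Rightarrow> f x * g y) \<partial>(M1 \<Otimes>\<^sub>M M2)) = integral\<^sup>L M1 f * integral\<^sup>L M2 g" .
qed



lemma phi_prod_integral:
  assumes s: "s > 0" and e: "e > 0"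
  shows "(\<integral>u. phi s u * phi e u \<partial>lborel) = 1 / sqrt (pi * (s + e))"
proof -
  define t where "t = s * e / (s + e)"
  have t: "t > 0" using s e by (simp add: t_def)
  have eq: "phi s u * phi e u = phi t u / sqrt (pi * (s + e))" for u
  proof -
    have ex: "exp (- u\<^sup>2 / s) * exp (- u\<^sup>2 / e) = exp (- u\<^sup>2 / t)"
      unfolding exp_add[symmetric] t_def using s e by (simp add: field_simps)
    have sq: "sqrt (pi * s) * sqrt (pi * e) = sqrt (pi * t) * sqrt (pi * (s + e))"
      unfolding real_sqrt_mult[symmetric] t_def using s e by (simp add: field_simps)
    show ?thesis unfolding phi_def using ex sq s e t
      by (simp add: field_simps)
  qed
  show ?thesis unfolding eq using t by simp
qed



lemma sgn_cases: "s \<in> {-1,0,1::real} \<Longrightarrow> s = 1 \<or> s = 0 \<or> s = -1" by auto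

lemma lborel_reflect: "(\<integral>x. f x \<partial>lborel) = (\<integral>x. f (- x) \<partial>lborel)" for f :: "real \<Rightarrow> real"
  using lborel_integral_real_affine[of "-1" f 0] by simp

lemma inner_E:
  assumes s: "\<sigma> > 0" and sc: "s \<in> {-1,0,1}"
  shows "(\<integral>a. (if sgn (a + u) = s then a else 0) * phi \<sigma> a \<partial>lborel) = s * (\<sigma>/2) * phi \<sigma> u"
proof -
  have one: "(\<integral>a. (if sgn (a + u) = 1 then a else 0) * phi \<sigma> a \<partial>lborel) = (\<sigma>/2) * phi \<sigma> u" for u
  proof -
    have "(\<integral>a. (if sgn (a + u) = 1 then a else 0) * phi \<sigma> a \<partial>lborel)
        = (\<integral>a. indicator {-u<..} a * (a * phi \<sigma> a) \<partial>lborel)"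
      by (intro Bochner_Integration.integral_cong) (auto simp: sgn_if indicator_def)
    also have "\<dots> = \<sigma>/2 * phi \<sigma> (-u)" using phi_tail(2)[OF s] .
    finally show ?thesis by (simp add: phi_even)
  qed
  consider "s = 1" | "s = 0" | "s = -1" using sc by auto
  then show ?thesis
  proof cases
    case 1 then show ?thesis using one by simp
  next
    case 2
    have "AE a in lborel. (if sgn (a + u) = s then a else 0) * phi \<sigma> a = 0"
      using AE_lborel_singleton[of "-u"] by eventually_elim (auto simp: 2 sgn_if)
    then show ?thesis using 2 by (simp add: integral_eq_zero_AE)
  next
    case 3
    have "(\<integral>a. (if sgn (a + u) = s then a else 0) * phi \<sigma> a \<partial>lborel)
        = (\<integral>a. (if sgn (- a + u) = s then - a else 0) * phi \<sigma> (- a) \<partial>lborel)"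
      by (rule lborel_reflect)
    also have "\<dots> = (\<integral>a. - ((if sgn (a + (-u)) = 1 then a else 0) * phi \<sigma> a) \<partial>lborel)"
      by (intro Bochner_Integration.integral_cong) (auto simp: 3 sgn_if phi_even)
    also have "\<dots> = - ((\<sigma>/2) * phi \<sigma> (-u))" using one[of "-u"] by simp
    finally show ?thesis using 3 by (simp add: phi_even)
  qed
qed

definition K :: "real \<Rightarrow> real \<Rightarrow> real \<Rightarrow> real" where
  "K \<sigma> s u = (\<integral>a. (if sgn (a + u) = s then 1 else 0) * phi \<sigma> a \<partial>lborel)"

lemma K_integrable:
  assumes s: "\<sigma> > 0"
  shows "integrable lborel (\<lambda>a. (if sgn (a + u) = s then 1 else 0) * phi \<sigma> a)"
  by (rule Bochner_Integration.integrable_bound[OF phi_integrable[OF s]]) (auto simp: s)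

lemma K_zero: "K \<sigma> 0 u = 0"
proof -
  have "AE a in lborel. (if sgn (a + u) = 0 then 1 else 0) * phi \<sigma> a = 0"
    using AE_lborel_singleton[of "-u"] by eventually_elim (auto simp: sgn_if)
  then show ?thesis unfolding K_def by (simp add: integral_eq_zero_AE)
qed

lemma K_reflect: "K \<sigma> (-1) u = K \<sigma> 1 (-u)"
proof -
  have "K \<sigma> (-1) u = (\<integral>a. (if sgn (- a + u) = -1 then 1 else 0) * phi \<sigma> (- a) \<partial>lborel)"
    unfolding K_def by (rule lborel_reflect)
  also have "\<dots> = K \<sigma> 1 (-u)" unfolding K_def
    by (intro Bochner_Integration.integral_cong) (auto simp: sgn_if phi_even)
  finally show ?thesis .
qed

lemma K_sum:
  assumes s: "\<sigma> > 0"
  shows "K \<sigma> 1 u + K \<sigma> (-1) u = 1"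
proof -
  have "K \<sigma> 1 u + K \<sigma> (-1) u + K \<sigma> 0 u = (\<integral>a. (if sgn (a + u) = 1 then 1 else 0) * phi \<sigma> a
     + (if sgn (a + u) = -1 then 1 else 0) * phi \<sigma> a + (if sgn (a + u) = 0 then 1 else 0) * phi \<sigma> a \<partial>lborel)"
    unfolding K_def using K_integrable[OF s] by simp
  also have "\<dots> = (\<integral>a. phi \<sigma> a \<partial>lborel)"
    by (intro Bochner_Integration.integral_cong) (auto simp: sgn_if)
  finally show ?thesis using s by (simp add: K_zero)
qed



definition q :: "real \<Rightarrow> real" where "q s = (if s = 0 then 0 else 1/2)"

lemma pair_lborel: "pair_sigma_finite (lborel::real measure) (lborel::real measure)"
  by (simp add: pair_sigma_finite_def lborel.sigma_finite_measure_axioms)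

lemma abs_x_phi_integrable: "\<sigma> > 0 \<Longrightarrow> integrable lborel (\<lambda>a. \<bar>a\<bar> * phi \<sigma> a)"
  using integrable_abs[OF phi_integrable_x, of \<sigma>] by (simp add: abs_mult mult.commute)

lemma twoE:
  assumes s: "\<sigma> > 0" and e: "\<eta> > 0" and sc: "s \<in> {-1,0,1}"
  shows "integrable (lborel \<Otimes>\<^sub>M lborel) (\<lambda>(a,u). (if sgn (a + u) = s then a else 0) * (phi \<sigma> a * phi \<eta> u))"
    "(\<integral>z. (case z of (a,u) \<Rightarrow> (if sgn (a + u) = s then a else 0) * (phi \<sigma> a * phi \<eta> u)) \<partial>(lborel \<Otimes>\<^sub>M lborel))
      = s * \<sigma> / (2 * sqrt (pi * (\<sigma> + \<eta>)))"
proof -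
  interpret P: pair_sigma_finite "lborel::real measure" "lborel::real measure" by (rule pair_lborel)
  have B: "integrable (lborel \<Otimes>\<^sub>M lborel) (\<lambda>(a,u). (\<bar>a\<bar> * phi \<sigma> a) * phi \<eta> u)"
    by (rule prod_integral(1)) (auto intro: lborel.sigma_finite_measure_axioms abs_x_phi_integrable s e simp: s e)
  show I: "integrable (lborel \<Otimes>\<^sub>M lborel) (\<lambda>(a,u). (if sgn (a + u) = s then a else 0) * (phi \<sigma> a * phi \<eta> u))"
    by (rule Bochner_Integration.integrable_bound[OF B])
       (auto simp: s e abs_mult split: prod.splits)
  have "(\<integral>z. (case z of (a,u) \<Rightarrow> (if sgn (a + u) = s then a else 0) * (phi \<sigma> a * phi \<eta> u)) \<partial>(lborel \<Otimes>\<^sub>M lborel))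
      = (\<integral>u. (\<integral>a. (if sgn (a + u) = s then a else 0) * (phi \<sigma> a * phi \<eta> u) \<partial>lborel) \<partial>lborel)"
    using lborel_pair.integral_snd[of "\<lambda>a u. (if sgn (a + u) = s then a else 0) * (phi \<sigma> a * phi \<eta> u)"] I
    by simp
  also have "\<dots> = (\<integral>u. phi \<eta> u * (\<integral>a. (if sgn (a + u) = s then a else 0) * phi \<sigma> a \<partial>lborel) \<partial>lborel)"
    by (intro Bochner_Integration.integral_cong refl, subst integral_mult_right_zero[symmetric])
       (simp add: ac_simps)
  also have "\<dots> = (\<integral>u. (s * (\<sigma>/2)) * (phi \<sigma> u * phi \<eta> u) \<partial>lborel)"
    by (intro Bochner_Integration.integral_cong refl) (simp add: inner_E[OF s sc])
  also have "\<dots> = s * \<sigma> / (2 * sqrt (pi * (\<sigma> + \<eta>)))"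
    by (simp add: phi_prod_integral[OF s e])
  finally show "(\<integral>z. (case z of (a,u) \<Rightarrow> (if sgn (a + u) = s then a else 0) * (phi \<sigma> a * phi \<eta> u)) \<partial>(lborel \<Otimes>\<^sub>M lborel))
      = s * \<sigma> / (2 * sqrt (pi * (\<sigma> + \<eta>)))" .
qed

lemma twoP:
  assumes s: "\<sigma> > 0" and e: "\<eta> > 0" and sc: "s \<in> {-1,0,1}"
  shows "integrable (lborel \<Otimes>\<^sub>M lborel) (\<lambda>(a,u). (if sgn (a + u) = s then 1 else 0) * (phi \<sigma> a * phi \<eta> u))"
    "(\<integral>z. (case z of (a,u) \<Rightarrow> (if sgn (a + u) = s then 1 else 0) * (phi \<sigma> a * phi \<eta> u)) \<partial>(lborel \<Otimes>\<^sub>M lborel))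
      = q s"
proof -
  interpret P: pair_sigma_finite "lborel::real measure" "lborel::real measure" by (rule pair_lborel)
  have B: "integrable (lborel \<Otimes>\<^sub>M lborel) (\<lambda>(a,u). phi \<sigma> a * phi \<eta> u)"
    by (rule prod_integral(1)) (auto intro: lborel.sigma_finite_measure_axioms simp: s e)
  have I: "integrable (lborel \<Otimes>\<^sub>M lborel) (\<lambda>(a,u). (if sgn (a + u) = s then 1 else 0) * (phi \<sigma> a * phi \<eta> u))"
    if "s \<in> {-1,0,1}" for s
    by (rule Bochner_Integration.integrable_bound[OF B])
       (auto simp: s e abs_mult split: prod.splits)
  then show "integrable (lborel \<Otimes>\<^sub>M lborel) (\<lambda>(a,u). (if sgn (a + u) = s then 1 else 0) * (phi \<sigma> a * phi \<eta> u))"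
    using sc .
  have eq: "(\<integral>z. (case z of (a,u) \<Rightarrow> (if sgn (a + u) = s then 1 else 0) * (phi \<sigma> a * phi \<eta> u)) \<partial>(lborel \<Otimes>\<^sub>M lborel))
      = (\<integral>u. phi \<eta> u * K \<sigma> s u \<partial>lborel)"
    and int: "integrable lborel (\<lambda>u. phi \<eta> u * K \<sigma> s u)"
    if "s \<in> {-1,0,1}" for s
  proof -
    have ii: "(\<integral>a. (if sgn (a + u) = s then 1 else 0) * (phi \<sigma> a * phi \<eta> u) \<partial>lborel) = phi \<eta> u * K \<sigma> s u" for u
      unfolding K_def
      by (subst integral_mult_right_zero[symmetric]) (simp add: ac_simps)
    show "(\<integral>z. (case z of (a,u) \<Rightarrow> (if sgn (a + u) = s then 1 else 0) * (phi \<sigma> a * phi \<eta> u)) \<partial>(lborel \<Otimes>\<^sub>M lborel))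
      = (\<integral>u. phi \<eta> u * K \<sigma> s u \<partial>lborel)"
      using lborel_pair.integral_snd[of "\<lambda>a u. (if sgn (a + u) = s then 1 else 0) * (phi \<sigma> a * phi \<eta> u)"] I[OF that]
      by (simp add: ii)
    show "integrable lborel (\<lambda>u. phi \<eta> u * K \<sigma> s u)"
      using lborel_pair.integrable_snd[of "\<lambda>a u. (if sgn (a + u) = s then 1 else 0) * (phi \<sigma> a * phi \<eta> u)"] I[OF that]
      by (simp add: ii)
  qed
  have sym: "(\<integral>u. phi \<eta> u * K \<sigma> (-1) u \<partial>lborel) = (\<integral>u. phi \<eta> u * K \<sigma> 1 u \<partial>lborel)"
    by (subst lborel_reflect) (simp add: K_reflect phi_even)
  have sum: "(\<integral>u. phi \<eta> u * K \<sigma> 1 u \<partial>lborel) + (\<integral>u. phi \<eta> u * K \<sigma> (-1) u \<partial>lborel) = 1"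
  proof -
    have "(\<integral>u. phi \<eta> u * K \<sigma> 1 u \<partial>lborel) + (\<integral>u. phi \<eta> u * K \<sigma> (-1) u \<partial>lborel)
        = (\<integral>u. phi \<eta> u * K \<sigma> 1 u + phi \<eta> u * K \<sigma> (-1) u \<partial>lborel)"
      using int[of 1] int[of "-1"] by simp
    also have "\<dots> = (\<integral>u. phi \<eta> u \<partial>lborel)"
      by (intro Bochner_Integration.integral_cong refl)
         (simp add: distrib_left[symmetric] K_sum[OF s])
    finally show ?thesis using e by simp
  qed
  consider "s = 1" | "s = 0" | "s = -1" using sc by auto
  then show "(\<integral>z. (case z of (a,u) \<Rightarrow> (if sgn (a + u) = s then 1 else 0) * (phi \<sigma> a * phi \<eta> u)) \<partial>(lborel \<Otimes>\<^sub>M lborel))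
      = q s"
  proof cases
    case 1 then show ?thesis using eq[of 1] sum sym by (simp add: q_def)
  next
    case 2 then show ?thesis using eq[of 0] by (simp add: q_def K_zero)
  next
    case 3 then show ?thesis using eq[of "-1"] sum sym by (simp add: q_def)
  qed
qed



lemma borel_measurable_Complex[measurable]:
  fixes f g :: "'a \<Rightarrow> real"
  assumes [measurable]: "f \<in> borel_measurable M" "g \<in> borel_measurable M"
  shows "(\<lambda>x. Complex (f x) (g x)) \<in> borel_measurable M"
proof -
  have "(\<lambda>x. Complex (f x) (g x)) = (\<lambda>x. complex_of_real (f x) + \<i> * complex_of_real (g x))"
    by (auto simp: complex_eq_iff)
  also have "\<dots> \<in> borel_measurable M" by measurable
  finally show ?thesis .
qed

definition rho :: "(real \<times> real) \<times> (real \<times> real) \<Rightarrow> complex \<times> complex" where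
  "rho p = (Complex (fst (fst p)) (fst (snd p)), Complex (snd (fst p)) (snd (snd p)))"

lemma rho_measurable[measurable]: "rho \<in> (lborel \<Otimes>\<^sub>M lborel) \<Otimes>\<^sub>M (lborel \<Otimes>\<^sub>M lborel) \<rightarrow>\<^sub>M borel"
  unfolding rho_def by measurable

lemma sf_lborel2: "sigma_finite_measure ((lborel::real measure) \<Otimes>\<^sub>M (lborel :: real measure))"
  by (simp add: lborel_prod lborel.sigma_finite_measure_axioms)

lemma lborel_cc: "(lborel :: (complex \<times> complex) measure) =
  distr ((lborel \<Otimes>\<^sub>M lborel) \<Otimes>\<^sub>M (lborel \<Otimes>\<^sub>M lborel)) borel rho"
proof (rule lborel_eqI)
  fix l u :: "complex \<times> complex"
  assume le: "\<And>b. b \<in> Basis \<Longrightarrow> l \<bullet> b \<le> u \<bullet> b"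
  obtain l1 l2 where l: "l = (l1, l2)" by (cases l)
  obtain u1 u2 where u: "u = (u1, u2)" by (cases u)
  have B: "(1, 0) \<in> (Basis :: (complex \<times> complex) set)" "(\<i>, 0) \<in> (Basis :: (complex \<times> complex) set)"
     "(0, 1) \<in> (Basis :: (complex \<times> complex) set)" "(0, \<i>) \<in> (Basis :: (complex \<times> complex) set)"
    by (auto simp: Basis_prod_def Basis_complex_def)
  have le1: "Re l1 \<le> Re u1" "Im l1 \<le> Im u1" "Re l2 \<le> Re u2" "Im l2 \<le> Im u2"
    using le[OF B(1)] le[OF B(2)] le[OF B(3)] le[OF B(4)] by (auto simp: l u)
  interpret L2: sigma_finite_measure "(lborel::real measure) \<Otimes>\<^sub>M (lborel :: real measure)"
    by (rule sf_lborel2)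
  have box: "box l u = {z. Re l1 < Re (fst z) \<and> Re (fst z) < Re u1 \<and> Im l1 < Im (fst z) \<and> Im (fst z) < Im u1
     \<and> Re l2 < Re (snd z) \<and> Re (snd z) < Re u2 \<and> Im l2 < Im (snd z) \<and> Im (snd z) < Im u2}"
    by (auto simp: box_def l u Basis_prod_def Basis_complex_def)
  have pre: "rho -` box l u \<inter> space ((lborel \<Otimes>\<^sub>M lborel) \<Otimes>\<^sub>M (lborel \<Otimes>\<^sub>M lborel)) =
     ({Re l1<..<Re u1} \<times> {Re l2<..<Re u2}) \<times> ({Im l1<..<Im u1} \<times> {Im l2<..<Im u2})"
    by (auto simp: box rho_def space_pair_measure)
  have "emeasure (distr ((lborel \<Otimes>\<^sub>M lborel) \<Otimes>\<^sub>M (lborel \<Otimes>\<^sub>M lborel)) borel rho) (box l u)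
     = emeasure ((lborel \<Otimes>\<^sub>M lborel) \<Otimes>\<^sub>M (lborel \<Otimes>\<^sub>M lborel))
        (({Re l1<..<Re u1} \<times> {Re l2<..<Re u2}) \<times> ({Im l1<..<Im u1} \<times> {Im l2<..<Im u2}))"
    by (subst emeasure_distr) (auto simp: pre)
  also have "\<dots> = ennreal ((Re u1 - Re l1) * (Re u2 - Re l2) * ((Im u1 - Im l1) * (Im u2 - Im l2)))"
    using le1
    by (simp add: sigma_finite_measure.emeasure_pair_measure_Times[OF sf_lborel2] lborel.emeasure_pair_measure_Times ennreal_mult)
  also have "\<dots> = (\<Prod>b\<in>Basis. (u - l) \<bullet> b)"
    by (simp add: l u Basis_prod_def Basis_complex_def prod.union_disjoint prod.reindex
        inj_on_def ac_simps)
  finally show "emeasure (distr ((lborel \<Otimes>\<^sub>M lborel) \<Otimes>\<^sub>M (lborel \<Otimes>\<^sub>M lborel)) borel rho) (box l u) = (\<Prod>b\<in>Basis. (u - l) \<bullet> b)" .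
qed simp



lemma distr_borel_lborel: "distr M borel f = distr M lborel f"
  unfolding distr_def by simp

lemma transfer:
  fixes M :: "'a measure"
    and K :: nat and p \<sigma>2 :: "nat \<Rightarrow> real" and \<eta>2 :: real
    and h n :: "'a \<Rightarrow> complex"
    and A B :: "real \<times> real \<Rightarrow> real"
  assumes PS: "prob_space M"
    and ppos: "\<And>k. k \<in> {1..K} \<Longrightarrow> p k > 0"
    and spos: "\<And>k. k \<in> {1..K} \<Longrightarrow> \<sigma>2 k > 0"
    and epos: "\<eta>2 > 0"
    and dh: "distributed M lborel h
           (\<lambda>z. ennreal (\<Sum>k\<in>{1..K}. p k * cgauss_density (\<sigma>2 k) z))"
    and dn: "distributed M lborel n (\<lambda>z. ennreal (cgauss_density \<eta>2 z))"
    and ind: "prob_space.indep_var M borel h borel n"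
    and Am[measurable]: "A \<in> borel_measurable borel" and Bm[measurable]: "B \<in> borel_measurable borel"
    and intA: "\<And>k. k \<in> {1..K} \<Longrightarrow> integrable (lborel \<Otimes>\<^sub>M lborel) (\<lambda>(a,u). A (a,u) * (phi (\<sigma>2 k) a * phi \<eta>2 u))"
    and intB: "\<And>k. k \<in> {1..K} \<Longrightarrow> integrable (lborel \<Otimes>\<^sub>M lborel) (\<lambda>(a,u). B (a,u) * (phi (\<sigma>2 k) a * phi \<eta>2 u))"
  shows "integrable M (\<lambda>x. A (Re (h x), Re (n x)) * B (Im (h x), Im (n x)))"
    "(\<integral>x. A (Re (h x), Re (n x)) * B (Im (h x), Im (n x)) \<partial>M) =
      (\<Sum>k\<in>{1..K}. p k * (\<integral>z. (case z of (a,u) \<Rightarrow> A (a,u) * (phi (\<sigma>2 k) a * phi \<eta>2 u)) \<partial>(lborel \<Otimes>\<^sub>M lborel))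
                       * (\<integral>z. (case z of (a,u) \<Rightarrow> B (a,u) * (phi (\<sigma>2 k) a * phi \<eta>2 u)) \<partial>(lborel \<Otimes>\<^sub>M lborel)))"
proof -
  interpret prob_space M by (rule PS)
  define fh where "fh z = (\<Sum>k\<in>{1..K}. p k * cgauss_density (\<sigma>2 k) z)" for z
  define fn where "fn z = cgauss_density \<eta>2 z" for z
  have fh_nn: "0 \<le> fh z" for z
    unfolding fh_def cgauss_density_def using ppos spos
    by (intro sum_nonneg mult_nonneg_nonneg) (auto intro: less_imp_le)
  have fn_nn: "0 \<le> fn z" for z
    unfolding fn_def cgauss_density_def using epos by simp
  have [measurable]: "fh \<in> borel_measurable borel" "fn \<in> borel_measurable borel"
    unfolding fh_def fn_def cgauss_density_def by measurable
  have hm[measurable]: "h \<in> borel_measurable M" and nm[measurable]: "n \<in> borel_measurable M"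
    using dh dn unfolding distributed_def by auto
  have Dh: "distr M borel h = density lborel (\<lambda>z. ennreal (fh z))"
    using dh unfolding distributed_def fh_def distr_borel_lborel by simp
  have Dn: "distr M borel n = density lborel (\<lambda>z. ennreal (fn z))"
    using dn unfolding distributed_def fn_def distr_borel_lborel by simp
  have sfn: "sigma_finite_measure (density lborel (\<lambda>z. ennreal (fn z)))"
  proof -
    have "prob_space (distr M borel n)" by (rule prob_space_distr) simp
    then show ?thesis unfolding Dn by (simp add: prob_space_imp_sigma_finite)
  qed
  have joint: "distr M (borel \<Otimes>\<^sub>M borel) (\<lambda>x. (h x, n x)) =
      density (lborel :: (complex \<times> complex) measure) (\<lambda>zw. ennreal (fh (fst zw) * fn (snd zw)))"
  proof -
    have "distr M (borel \<Otimes>\<^sub>M borel) (\<lambda>x. (h x, n x)) = distr M borel h \<Otimes>\<^sub>M distr M borel n"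
      using ind unfolding indep_var_distribution_eq by simp
    also have "\<dots> = density (lborel \<Otimes>\<^sub>M lborel) (\<lambda>(x,y). ennreal (fh x) * ennreal (fn y))"
      unfolding Dh Dn
      by (rule pair_measure_density) (auto simp: sfn lborel.sigma_finite_measure_axioms)
    also have "\<dots> = density (lborel :: (complex \<times> complex) measure) (\<lambda>zw. ennreal (fh (fst zw) * fn (snd zw)))"
      unfolding lborel_prod
    proof (intro density_cong)
      have "(\<lambda>(x,y). ennreal (fh x) * ennreal (fn y)) \<in> borel_measurable (borel \<Otimes>\<^sub>M borel)"
        by measurable
      then show "(\<lambda>(x,y). ennreal (fh x) * ennreal (fn y)) \<in> borel_measurable (lborel :: (complex \<times> complex) measure)"
        by (simp add: borel_prod)
      have "(\<lambda>zw. ennreal (fh (fst zw) * fn (snd zw))) \<in> borel_measurable (borel \<Otimes>\<^sub>M borel)"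
        by measurable
      then show "(\<lambda>zw. ennreal (fh (fst zw) * fn (snd zw))) \<in> borel_measurable (lborel :: (complex \<times> complex) measure)"
        by (simp add: borel_prod)
    qed (auto simp: ennreal_mult fh_nn fn_nn)
    finally show ?thesis .
  qed
  define G where "G zw = A (Re (fst zw), Re (snd zw)) * B (Im (fst zw), Im (snd zw))" for zw :: "complex \<times> complex"
  have Gm[measurable]: "G \<in> borel_measurable (borel \<Otimes>\<^sub>M borel)"
    unfolding G_def by measurable
  have Gm'[measurable]: "G \<in> borel_measurable borel"
    using Gm by (simp add: borel_prod)
  define R4 where "R4 = ((lborel::real measure) \<Otimes>\<^sub>M (lborel::real measure)) \<Otimes>\<^sub>M ((lborel::real measure) \<Otimes>\<^sub>M (lborel::real measure))"
  define Ak where "Ak k = (\<lambda>(a,u). A (a,u) * (phi (\<sigma>2 k) a * phi \<eta>2 u))" for k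
  define Bk where "Bk k = (\<lambda>(a,u). B (a,u) * (phi (\<sigma>2 k) a * phi \<eta>2 u))" for k
  have rhoeq: "fh (fst (rho y)) * fn (snd (rho y)) * G (rho y) =
      (\<Sum>k\<in>{1..K}. p k * (Ak k (fst y) * Bk k (snd y)))" for y
  proof -
    obtain a u b w where y: "y = ((a,u),(b,w))" by (metis prod.exhaust)
    have "fh (fst (rho y)) = (\<Sum>k\<in>{1..K}. p k * (phi (\<sigma>2 k) a * phi (\<sigma>2 k) b))"
      unfolding fh_def rho_def y using spos by (intro sum.cong refl) (simp add: cgauss_phi)
    moreover have "fn (snd (rho y)) = phi \<eta>2 u * phi \<eta>2 w"
      unfolding fn_def rho_def y using epos by (simp add: cgauss_phi)
    moreover have "G (rho y) = A (a,u) * B (b,w)"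
      unfolding G_def rho_def y by simp
    ultimately show ?thesis
      unfolding y Ak_def Bk_def by (simp add: sum_distrib_left sum_distrib_right mult_ac)
  qed
  have sfL2: "sigma_finite_measure ((lborel::real measure) \<Otimes>\<^sub>M (lborel::real measure))"
    by (rule sf_lborel2)
  have intk: "integrable R4 (\<lambda>(x,y). Ak k x * Bk k y)"
    "(\<integral>z. (case z of (x,y) \<Rightarrow> Ak k x * Bk k y) \<partial>R4) = integral\<^sup>L (lborel \<Otimes>\<^sub>M lborel) (Ak k) * integral\<^sup>L (lborel \<Otimes>\<^sub>M lborel) (Bk k)"
    if "k \<in> {1..K}" for k
    unfolding R4_def using prod_integral[OF sfL2 sfL2, of "Ak k" "Bk k"] intA[OF that] intB[OF that]
    unfolding Ak_def Bk_def by auto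
  have sumeq: "(\<lambda>y. fh (fst (rho y)) * fn (snd (rho y)) * G (rho y)) =
      (\<lambda>y. \<Sum>k\<in>{1..K}. p k * (case y of (x,y) \<Rightarrow> Ak k x * Bk k y))"
    using rhoeq by (auto simp: fun_eq_iff split: prod.splits)
  have int4: "integrable R4 (\<lambda>y. fh (fst (rho y)) * fn (snd (rho y)) * G (rho y))"
    unfolding sumeq
  proof (rule Bochner_Integration.integrable_sum)
    fix k assume "k \<in> {1..K}"
    then show "integrable R4 (\<lambda>y. p k * (case y of (x,y) \<Rightarrow> Ak k x * Bk k y))"
      using intk(1) by (intro integrable_mult_right) auto
  qed
  have eq4: "(\<integral>y. fh (fst (rho y)) * fn (snd (rho y)) * G (rho y) \<partial>R4) =
      (\<Sum>k\<in>{1..K}. p k * (integral\<^sup>L (lborel \<Otimes>\<^sub>M lborel) (Ak k) * integral\<^sup>L (lborel \<Otimes>\<^sub>M lborel) (Bk k)))"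
    unfolding sumeq using intk by (subst Bochner_Integration.integral_sum) auto
  have rho_m: "rho \<in> R4 \<rightarrow>\<^sub>M borel" unfolding R4_def by (rule rho_measurable)
  have "(\<lambda>zw. fh (fst zw) * fn (snd zw)) \<in> borel_measurable (borel \<Otimes>\<^sub>M borel)"
    by measurable
  then have J_m[measurable]: "(\<lambda>zw. fh (fst zw) * fn (snd zw)) \<in> borel_measurable (borel :: (complex \<times> complex) measure)"
    by (simp add: borel_prod)
  have intL: "integrable (lborel :: (complex \<times> complex) measure) (\<lambda>zw. fh (fst zw) * fn (snd zw) * G zw)"
    using int4 unfolding lborel_cc R4_def[symmetric]
    by (subst integrable_distr_eq[OF rho_m]) auto
  have eqL: "(\<integral>zw. fh (fst zw) * fn (snd zw) * G zw \<partial>(lborel :: (complex \<times> complex) measure)) =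
      (\<integral>y. fh (fst (rho y)) * fn (snd (rho y)) * G (rho y) \<partial>R4)"
    unfolding lborel_cc R4_def[symmetric]
    by (subst integral_distr[OF rho_m]) auto
  have pm: "(\<lambda>x. (h x, n x)) \<in> M \<rightarrow>\<^sub>M borel \<Otimes>\<^sub>M borel" by measurable
  have intM: "integrable M (\<lambda>x. G (h x, n x))"
  proof -
    have "integrable (distr M (borel \<Otimes>\<^sub>M borel) (\<lambda>x. (h x, n x))) G"
      unfolding joint
      by (subst integrable_density) (auto simp: fh_nn fn_nn intL)
    then show ?thesis by (subst (asm) integrable_distr_eq[OF pm Gm]) simp
  qed
  have eqM: "(\<integral>x. G (h x, n x) \<partial>M) = (\<integral>zw. fh (fst zw) * fn (snd zw) * G zw \<partial>(lborel :: (complex \<times> complex) measure))"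
  proof -
    have "(\<integral>x. G (h x, n x) \<partial>M) = integral\<^sup>L (distr M (borel \<Otimes>\<^sub>M borel) (\<lambda>x. (h x, n x))) G"
      by (subst integral_distr[OF pm Gm]) simp
    also have "\<dots> = (\<integral>zw. fh (fst zw) * fn (snd zw) * G zw \<partial>(lborel :: (complex \<times> complex) measure))"
      unfolding joint by (subst integral_density) (auto simp: fh_nn fn_nn)
    finally show ?thesis .
  qed
  show "integrable M (\<lambda>x. A (Re (h x), Re (n x)) * B (Im (h x), Im (n x)))"
    using intM unfolding G_def by simp
  show "(\<integral>x. A (Re (h x), Re (n x)) * B (Im (h x), Im (n x)) \<partial>M) =
      (\<Sum>k\<in>{1..K}. p k * (\<integral>z. (case z of (a,u) \<Rightarrow> A (a,u) * (phi (\<sigma>2 k) a * phi \<eta>2 u)) \<partial>(lborel \<Otimes>\<^sub>M lborel))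
                       * (\<integral>z. (case z of (a,u) \<Rightarrow> B (a,u) * (phi (\<sigma>2 k) a * phi \<eta>2 u)) \<partial>(lborel \<Otimes>\<^sub>M lborel)))"
    using eqM eqL eq4 unfolding G_def Ak_def Bk_def by (simp add: ac_simps)
qed



lemma num_identity:
  fixes K :: nat and p \<sigma>2 :: "nat \<Rightarrow> real" and \<eta>2 s1 s2 :: real
  assumes psum: "(\<Sum>k\<in>{1..K}. p k) = 1" and s1: "s1 \<in> {-1,0,1}"
  shows "(\<Sum>k\<in>{1..K}. p k * (s1 * \<sigma>2 k / (2 * sqrt (pi * (\<sigma>2 k + \<eta>2)))) * q s2)
     = sqrt (2 / pi) * (\<Sum>k\<in>{1..K}. p k * \<sigma>2 k / sqrt (\<sigma>2 k + \<eta>2)) * (s1 / sqrt 2)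
        * (\<Sum>k\<in>{1..K}. p k * q s1 * q s2)"
proof -
  let ?S = "(\<Sum>k\<in>{1..K}. p k * \<sigma>2 k / sqrt (\<sigma>2 k + \<eta>2))"
  have "(\<Sum>k\<in>{1..K}. p k * (s1 * \<sigma>2 k / (2 * sqrt (pi * (\<sigma>2 k + \<eta>2)))) * q s2)
      = (\<Sum>k\<in>{1..K}. (s1 * q s2 / (2 * sqrt pi)) * (p k * \<sigma>2 k / sqrt (\<sigma>2 k + \<eta>2)))"
    by (intro sum.cong refl) (simp add: real_sqrt_mult mult_ac)
  also have "\<dots> = (s1 * q s2 / (2 * sqrt pi)) * ?S"
    by (simp add: sum_distrib_left)
  finally have L: "(\<Sum>k\<in>{1..K}. p k * (s1 * \<sigma>2 k / (2 * sqrt (pi * (\<sigma>2 k + \<eta>2)))) * q s2)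
      = (s1 * q s2 / (2 * sqrt pi)) * ?S" .
  have R: "(\<Sum>k\<in>{1..K}. p k * q s1 * q s2) = q s1 * q s2"
    using psum by (simp add: sum_distrib_right[symmetric])
  have sq: "sqrt (2 / pi) / sqrt 2 = 1 / sqrt pi"
    by (simp add: real_sqrt_divide)
  have qs: "s1 * q s1 = s1 / 2" using s1 by (auto simp: q_def)
  have "sqrt (2 / pi) * ?S * (s1 / sqrt 2) * (q s1 * q s2) = (sqrt (2 / pi) / sqrt 2) * ?S * (s1 * q s1) * q s2"
    by (simp add: field_simps)
  also have "\<dots> = (s1 * q s2 / (2 * sqrt pi)) * ?S"
    unfolding sq qs by (simp add: field_simps)
  finally show ?thesis using L R by simp
qed



lemma meas_prod_borel: "f \<in> borel_measurable (borel \<Otimes>\<^sub>M borel) \<Longrightarrow> f \<in> borel_measurable borel"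
  for f :: "real \<times> real \<Rightarrow> real"
  by (simp add: borel_prod)

lemma int_double_sum:
  fixes f :: "real \<Rightarrow> real \<Rightarrow> 'a \<Rightarrow> real"
  assumes "\<And>s1 s2. s1 \<in> S \<Longrightarrow> s2 \<in> S \<Longrightarrow> integrable M (f s1 s2)"
  shows "integrable M (\<lambda>x. \<Sum>s1\<in>S. \<Sum>s2\<in>S. c s1 s2 * f s1 s2 x)"
    "(\<integral>x. (\<Sum>s1\<in>S. \<Sum>s2\<in>S. c s1 s2 * f s1 s2 x) \<partial>M) = (\<Sum>s1\<in>S. \<Sum>s2\<in>S. c s1 s2 * integral\<^sup>L M (f s1 s2))"
proof -
  have i: "integrable M (\<lambda>x. \<Sum>s2\<in>S. c s1 s2 * f s1 s2 x)" if "s1 \<in> S" for s1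
    by (rule Bochner_Integration.integrable_sum) (use assms that in auto)
  show "integrable M (\<lambda>x. \<Sum>s1\<in>S. \<Sum>s2\<in>S. c s1 s2 * f s1 s2 x)"
    by (rule Bochner_Integration.integrable_sum) (use i in auto)
  have "(\<integral>x. (\<Sum>s1\<in>S. \<Sum>s2\<in>S. c s1 s2 * f s1 s2 x) \<partial>M) = (\<Sum>s1\<in>S. \<integral>x. (\<Sum>s2\<in>S. c s1 s2 * f s1 s2 x) \<partial>M)"
    by (rule Bochner_Integration.integral_sum) (use i in auto)
  also have "\<dots> = (\<Sum>s1\<in>S. \<Sum>s2\<in>S. c s1 s2 * integral\<^sup>L M (f s1 s2))"
  proof (rule sum.cong[OF refl])
    fix s1 assume s1: "s1 \<in> S"
    show "(\<integral>x. (\<Sum>s2\<in>S. c s1 s2 * f s1 s2 x) \<partial>M) = (\<Sum>s2\<in>S. c s1 s2 * integral\<^sup>L M (f s1 s2))"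
      by (subst Bochner_Integration.integral_sum) (use assms s1 in auto)
  qed
  finally show "(\<integral>x. (\<Sum>s1\<in>S. \<Sum>s2\<in>S. c s1 s2 * f s1 s2 x) \<partial>M) = (\<Sum>s1\<in>S. \<Sum>s2\<in>S. c s1 s2 * integral\<^sup>L M (f s1 s2))" .
qed

theorem theorem2:
  fixes M :: "'a measure"
    and K :: nat and p \<sigma>2 :: "nat \<Rightarrow> real" and \<eta>2 :: real
    and h n :: "'a \<Rightarrow> complex"
  assumes "prob_space M"
    and "\<And>k. k \<in> {1..K} \<Longrightarrow> p k > 0"
    and "(\<Sum>k\<in>{1..K}. p k) = 1"
    and "\<And>k. k \<in> {1..K} \<Longrightarrow> \<sigma>2 k > 0"
    and "\<eta>2 > 0"
    and "distributed M lborel h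
           (\<lambda>z. ennreal (\<Sum>k\<in>{1..K}. p k * cgauss_density (\<sigma>2 k) z))"
    and "distributed M lborel n (\<lambda>z. ennreal (cgauss_density \<eta>2 z))"
    and "prob_space.indep_var M borel h borel n"
  shows "AE x in M.
           complex_cond_exp M (vimage_algebra (space M) (\<lambda>y. Qb (h y + n y)) borel) h x
           = complex_of_real (sqrt (2 / pi) *
               (\<Sum>k\<in>{1..K}. p k * \<sigma>2 k / sqrt (\<sigma>2 k + \<eta>2)))
             * Qb (h x + n x)"
proof -
  note PS = assms(1) and ppos = assms(2) and psum = assms(3) and spos = assms(4) and epos = assms(5)
    and dh = assms(6) and dn = assms(7) and ind = assms(8)
  interpret prob_space M by (rule PS)
  have hm[measurable]: "h \<in> borel_measurable M" and nm[measurable]: "n \<in> borel_measurable M"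
    using dh dn unfolding distributed_def by auto
  define R where "R y = Qb (h y + n y)" for y
  define F where "F = vimage_algebra (space M) R borel"
  define C where "C = sqrt (2 / pi) * (\<Sum>k\<in>{1..K}. p k * \<sigma>2 k / sqrt (\<sigma>2 k + \<eta>2))"
  define S where "S = {-1, 0, 1::real}"
  define cP where "cP s1 s2 = Complex s1 s2 / complex_of_real (sqrt 2)" for s1 s2
  define t1 where "t1 x = sgn (Re (h x) + Re (n x))" for x
  define t2 where "t2 x = sgn (Im (h x) + Im (n x))" for x
  define E where "E s1 s2 x = (if t1 x = s1 then 1 else 0) * (if t2 x = s2 then (1::real) else 0)" for s1 s2 x
  have t1S: "t1 x \<in> S" and t2S: "t2 x \<in> S" for x
    by (auto simp: S_def t1_def t2_def sgn_if)
  have R_eq: "R x = cP (t1 x) (t2 x)" for x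
    by (simp add: R_def Qb_def cP_def t1_def t2_def)
  have Qb_m[measurable]: "Qb \<in> borel_measurable borel"
    unfolding Qb_def by measurable
  have Rm[measurable]: "R \<in> borel_measurable M" unfolding R_def by measurable
  have Em[measurable]: "E s1 s2 \<in> borel_measurable M" for s1 s2
    unfolding E_def t1_def t2_def by measurable
  have subalg: "subalgebra M F"
    unfolding subalgebra_def F_def
    using sets_image_in_sets[of M "space M" R borel] Rm by auto
  interpret SF: sigma_finite_subalgebra M F
    by (rule finite_measure_subalgebra_is_sigma_finite) (simp add: finite_measure_subalgebra_def finite_measure_subalgebra_axioms_def subalg finite_measure_axioms)
  have RF[measurable]: "R \<in> measurable F borel"
    unfolding F_def by (rule measurable_vimage_algebra1) simp
  have TE: "integrable M (\<lambda>x. E s1 s2 x * Re (h x)) \<and>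
      (\<integral>x. E s1 s2 x * Re (h x) \<partial>M) = (\<Sum>k\<in>{1..K}. p k * (s1 * \<sigma>2 k / (2 * sqrt (pi * (\<sigma>2 k + \<eta>2)))) * q s2)"
    if "s1 \<in> S" "s2 \<in> S" for s1 s2
  proof -
    let ?A = "\<lambda>(a::real,u). if sgn (a + u) = s1 then a else 0"
    let ?B = "\<lambda>(b::real,w). if sgn (b + w) = s2 then 1 else (0::real)"
    have e: "E s1 s2 x * Re (h x) = ?A (Re (h x), Re (n x)) * ?B (Im (h x), Im (n x))" for x
      by (simp add: E_def t1_def t2_def)
    have iA: "integrable (lborel \<Otimes>\<^sub>M lborel) (\<lambda>(a,u). ?A (a,u) * (phi (\<sigma>2 k) a * phi \<eta>2 u))"
      and vA: "(\<integral>z. (case z of (a,u) \<Rightarrow> ?A (a,u) * (phi (\<sigma>2 k) a * phi \<eta>2 u)) \<partial>(lborel \<Otimes>\<^sub>M lborel)) = s1 * \<sigma>2 k / (2 * sqrt (pi * (\<sigma>2 k + \<eta>2)))"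
      if "k \<in> {1..K}" for k
      using twoE[OF spos[OF that] epos, of s1] \<open>s1 \<in> S\<close> by (simp_all add: S_def)
    have iB: "integrable (lborel \<Otimes>\<^sub>M lborel) (\<lambda>(a,u). ?B (a,u) * (phi (\<sigma>2 k) a * phi \<eta>2 u))"
      and vB: "(\<integral>z. (case z of (a,u) \<Rightarrow> ?B (a,u) * (phi (\<sigma>2 k) a * phi \<eta>2 u)) \<partial>(lborel \<Otimes>\<^sub>M lborel)) = q s2"
      if "k \<in> {1..K}" for k
      using twoP[OF spos[OF that] epos, of s2] \<open>s2 \<in> S\<close> by (simp_all add: S_def)
    have Am: "?A \<in> borel_measurable borel" by (rule meas_prod_borel) measurable
    have Bm: "?B \<in> borel_measurable borel" by (rule meas_prod_borel) measurable
    note T = transfer[OF PS ppos spos epos dh dn ind Am Bm iA iB]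
    have "(\<Sum>k\<in>{1..K}. p k * (\<integral>z. (case z of (a,u) \<Rightarrow> ?A (a,u) * (phi (\<sigma>2 k) a * phi \<eta>2 u)) \<partial>(lborel \<Otimes>\<^sub>M lborel))
                       * (\<integral>z. (case z of (a,u) \<Rightarrow> ?B (a,u) * (phi (\<sigma>2 k) a * phi \<eta>2 u)) \<partial>(lborel \<Otimes>\<^sub>M lborel)))
      = (\<Sum>k\<in>{1..K}. p k * (s1 * \<sigma>2 k / (2 * sqrt (pi * (\<sigma>2 k + \<eta>2)))) * q s2)"
      by (rule sum.cong) (simp_all only: vA vB)
    then show ?thesis
      unfolding e using T by simp
  qed
  have TI: "integrable M (\<lambda>x. E s1 s2 x * Im (h x)) \<and>
      (\<integral>x. E s1 s2 x * Im (h x) \<partial>M) = (\<Sum>k\<in>{1..K}. p k * q s1 * (s2 * \<sigma>2 k / (2 * sqrt (pi * (\<sigma>2 k + \<eta>2)))))"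
    if "s1 \<in> S" "s2 \<in> S" for s1 s2
  proof -
    let ?A = "\<lambda>(a::real,u). if sgn (a + u) = s1 then 1 else (0::real)"
    let ?B = "\<lambda>(b::real,w). if sgn (b + w) = s2 then b else 0"
    have e: "E s1 s2 x * Im (h x) = ?A (Re (h x), Re (n x)) * ?B (Im (h x), Im (n x))" for x
      by (simp add: E_def t1_def t2_def)
    have iA: "integrable (lborel \<Otimes>\<^sub>M lborel) (\<lambda>(a,u). ?A (a,u) * (phi (\<sigma>2 k) a * phi \<eta>2 u))"
      and vA: "(\<integral>z. (case z of (a,u) \<Rightarrow> ?A (a,u) * (phi (\<sigma>2 k) a * phi \<eta>2 u)) \<partial>(lborel \<Otimes>\<^sub>M lborel)) = q s1"
      if "k \<in> {1..K}" for k
      using twoP[OF spos[OF that] epos, of s1] \<open>s1 \<in> S\<close> by (simp_all add: S_def)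
    have iB: "integrable (lborel \<Otimes>\<^sub>M lborel) (\<lambda>(a,u). ?B (a,u) * (phi (\<sigma>2 k) a * phi \<eta>2 u))"
      and vB: "(\<integral>z. (case z of (a,u) \<Rightarrow> ?B (a,u) * (phi (\<sigma>2 k) a * phi \<eta>2 u)) \<partial>(lborel \<Otimes>\<^sub>M lborel)) = s2 * \<sigma>2 k / (2 * sqrt (pi * (\<sigma>2 k + \<eta>2)))"
      if "k \<in> {1..K}" for k
      using twoE[OF spos[OF that] epos, of s2] \<open>s2 \<in> S\<close> by (simp_all add: S_def)
    have Am: "?A \<in> borel_measurable borel" by (rule meas_prod_borel) measurable
    have Bm: "?B \<in> borel_measurable borel" by (rule meas_prod_borel) measurable
    note T = transfer[OF PS ppos spos epos dh dn ind Am Bm iA iB]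
    have "(\<Sum>k\<in>{1..K}. p k * (\<integral>z. (case z of (a,u) \<Rightarrow> ?A (a,u) * (phi (\<sigma>2 k) a * phi \<eta>2 u)) \<partial>(lborel \<Otimes>\<^sub>M lborel))
                       * (\<integral>z. (case z of (a,u) \<Rightarrow> ?B (a,u) * (phi (\<sigma>2 k) a * phi \<eta>2 u)) \<partial>(lborel \<Otimes>\<^sub>M lborel)))
      = (\<Sum>k\<in>{1..K}. p k * q s1 * (s2 * \<sigma>2 k / (2 * sqrt (pi * (\<sigma>2 k + \<eta>2)))))"
      by (rule sum.cong) (simp_all only: vA vB)
    then show ?thesis
      unfolding e using T by simp
  qed
  have TP: "integrable M (E s1 s2) \<and>
      (\<integral>x. E s1 s2 x \<partial>M) = (\<Sum>k\<in>{1..K}. p k * q s1 * q s2)"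
    if "s1 \<in> S" "s2 \<in> S" for s1 s2
  proof -
    let ?A = "\<lambda>(a::real,u). if sgn (a + u) = s1 then 1 else (0::real)"
    let ?B = "\<lambda>(b::real,w). if sgn (b + w) = s2 then 1 else (0::real)"
    have e: "E s1 s2 x = ?A (Re (h x), Re (n x)) * ?B (Im (h x), Im (n x))" for x
      by (simp add: E_def t1_def t2_def)
    have iA: "integrable (lborel \<Otimes>\<^sub>M lborel) (\<lambda>(a,u). ?A (a,u) * (phi (\<sigma>2 k) a * phi \<eta>2 u))"
      and vA: "(\<integral>z. (case z of (a,u) \<Rightarrow> ?A (a,u) * (phi (\<sigma>2 k) a * phi \<eta>2 u)) \<partial>(lborel \<Otimes>\<^sub>M lborel)) = q s1"
      if "k \<in> {1..K}" for k
      using twoP[OF spos[OF that] epos, of s1] \<open>s1 \<in> S\<close> by (simp_all add: S_def)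
    have iB: "integrable (lborel \<Otimes>\<^sub>M lborel) (\<lambda>(a,u). ?B (a,u) * (phi (\<sigma>2 k) a * phi \<eta>2 u))"
      and vB: "(\<integral>z. (case z of (a,u) \<Rightarrow> ?B (a,u) * (phi (\<sigma>2 k) a * phi \<eta>2 u)) \<partial>(lborel \<Otimes>\<^sub>M lborel)) = q s2"
      if "k \<in> {1..K}" for k
      using twoP[OF spos[OF that] epos, of s2] \<open>s2 \<in> S\<close> by (simp_all add: S_def)
    have Am: "?A \<in> borel_measurable borel" by (rule meas_prod_borel) measurable
    have Bm: "?B \<in> borel_measurable borel" by (rule meas_prod_borel) measurable
    note T = transfer[OF PS ppos spos epos dh dn ind Am Bm iA iB]
    have "(\<Sum>k\<in>{1..K}. p k * (\<integral>z. (case z of (a,u) \<Rightarrow> ?A (a,u) * (phi (\<sigma>2 k) a * phi \<eta>2 u)) \<partial>(lborel \<Otimes>\<^sub>M lborel))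
                       * (\<integral>z. (case z of (a,u) \<Rightarrow> ?B (a,u) * (phi (\<sigma>2 k) a * phi \<eta>2 u)) \<partial>(lborel \<Otimes>\<^sub>M lborel)))
      = (\<Sum>k\<in>{1..K}. p k * q s1 * q s2)"
      by (rule sum.cong) (simp_all only: vA vB)
    then have "(\<integral>x. E s1 s2 x \<partial>M) = (\<Sum>k\<in>{1..K}. p k * q s1 * q s2)"
      unfolding e using T by simp
    moreover have "integrable M (E s1 s2)"
      unfolding e using T by simp
    ultimately show ?thesis by simp
  qed
  have collapse: "(\<Sum>s1\<in>S. \<Sum>s2\<in>S. g s1 s2 * E s1 s2 x) = g (t1 x) (t2 x)" for g x
    using t1S[of x] t2S[of x] by (auto simp: S_def E_def)
  have collapse2: "(\<Sum>s1\<in>S. \<Sum>s2\<in>S. g s1 s2 * (E s1 s2 x * y)) = g (t1 x) (t2 x) * y" for g x y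
    using t1S[of x] t2S[of x] by (auto simp: S_def E_def)
  have char: "AE x in M. real_cond_exp M F Y x = C * V (t1 x) (t2 x)"
    if Yint: "\<And>s1 s2. s1 \<in> S \<Longrightarrow> s2 \<in> S \<Longrightarrow> integrable M (\<lambda>x. E s1 s2 x * Y x)"
    and Yval: "\<And>s1 s2. s1 \<in> S \<Longrightarrow> s2 \<in> S \<Longrightarrow> (\<integral>x. E s1 s2 x * Y x \<partial>M) = C * V s1 s2 * (\<integral>x. E s1 s2 x \<partial>M)"
    and gF: "(\<lambda>x. C * V (t1 x) (t2 x)) \<in> borel_measurable F"
    for Y V
  proof (rule SF.real_cond_exp_charact)
    have Eint: "integrable M (E s1 s2)" if "s1 \<in> S" "s2 \<in> S" for s1 s2 using TP[OF that] by simp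
    note D1 = int_double_sum[of S M "\<lambda>s1 s2 x. E s1 s2 x * Y x", OF Yint]
    note D2 = int_double_sum[of S M "\<lambda>s1 s2. E s1 s2", OF Eint]
    fix A assume "A \<in> sets F"
    then obtain B where B: "B \<in> sets borel" and A: "A = R -` B \<inter> space M"
      unfolding F_def by (subst (asm) sets_vimage_algebra2) auto
    have indA: "indicator A x = indicator B (cP (t1 x) (t2 x))" if "x \<in> space M" for x :: 'a
      using that by (auto simp: A R_eq indicator_def)
    have "(\<integral>x\<in>A. Y x \<partial>M) = (\<integral>x. (\<Sum>s1\<in>S. \<Sum>s2\<in>S. indicator B (cP s1 s2) * (E s1 s2 x * Y x)) \<partial>M)"
      unfolding set_lebesgue_integral_def
      by (intro Bochner_Integration.integral_cong refl) (simp add: collapse2 indA)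
    also have "\<dots> = (\<Sum>s1\<in>S. \<Sum>s2\<in>S. indicator B (cP s1 s2) * (\<integral>x. E s1 s2 x * Y x \<partial>M))"
      using D1(2) .
    also have "\<dots> = (\<Sum>s1\<in>S. \<Sum>s2\<in>S. (indicator B (cP s1 s2) * (C * V s1 s2)) * (\<integral>x. E s1 s2 x \<partial>M))"
      by (intro sum.cong refl) (simp add: Yval)
    also have "\<dots> = (\<integral>x. (\<Sum>s1\<in>S. \<Sum>s2\<in>S. (indicator B (cP s1 s2) * (C * V s1 s2)) * E s1 s2 x) \<partial>M)"
      using D2(2) by simp
    also have "\<dots> = (\<integral>x\<in>A. C * V (t1 x) (t2 x) \<partial>M)"
      unfolding set_lebesgue_integral_def
      by (intro Bochner_Integration.integral_cong refl) (simp add: collapse indA)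
    finally show "(\<integral>x\<in>A. Y x \<partial>M) = (\<integral>x\<in>A. C * V (t1 x) (t2 x) \<partial>M)" .
  next
    have Eint: "integrable M (E s1 s2)" if "s1 \<in> S" "s2 \<in> S" for s1 s2 using TP[OF that] by simp
    note D1 = int_double_sum[of S M "\<lambda>s1 s2 x. E s1 s2 x * Y x", OF Yint]
    note D2 = int_double_sum[of S M "\<lambda>s1 s2. E s1 s2", OF Eint]
    show "integrable M Y"
    proof -
      have "(\<lambda>x. \<Sum>s1\<in>S. \<Sum>s2\<in>S. E s1 s2 x * Y x) = Y"
        using collapse2[of "\<lambda>_ _. 1"] by simp
      then show ?thesis using D1(1)[of "\<lambda>_ _. 1"] by simp
    qed
    show "integrable M (\<lambda>x. C * V (t1 x) (t2 x))"
      using D2(1)[of "\<lambda>s1 s2. C * V s1 s2"] by (simp add: collapse)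
  qed (rule gF)
  have ReR: "Re (R x) = t1 x / sqrt 2" and ImR: "Im (R x) = t2 x / sqrt 2" for x
    by (simp_all add: R_eq cP_def)
  have charRe: "AE x in M. real_cond_exp M F (\<lambda>x. Re (h x)) x = C * (t1 x / sqrt 2)"
  proof (rule char)
    fix s1 s2 assume s: "s1 \<in> S" "s2 \<in> S"
    show "integrable M (\<lambda>x. E s1 s2 x * Re (h x))" using TE[OF s] by simp
    show "(\<integral>x. E s1 s2 x * Re (h x) \<partial>M) = C * (s1 / sqrt 2) * (\<integral>x. E s1 s2 x \<partial>M)"
      using TE[OF s] TP[OF s] num_identity[OF psum, of s1 \<sigma>2 \<eta>2 s2] s
      by (simp add: C_def S_def)
  next
    have "(\<lambda>x. C * (t1 x / sqrt 2)) = (\<lambda>x. C * Re (R x))" by (simp add: ReR)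
    also have "\<dots> \<in> borel_measurable F" by measurable
    finally show "(\<lambda>x. C * (t1 x / sqrt 2)) \<in> borel_measurable F" .
  qed
  have charIm: "AE x in M. real_cond_exp M F (\<lambda>x. Im (h x)) x = C * (t2 x / sqrt 2)"
  proof (rule char)
    fix s1 s2 assume s: "s1 \<in> S" "s2 \<in> S"
    show "integrable M (\<lambda>x. E s1 s2 x * Im (h x))" using TI[OF s] by simp
    have "(\<Sum>k\<in>{1..K}. p k * q s1 * (s2 * \<sigma>2 k / (2 * sqrt (pi * (\<sigma>2 k + \<eta>2)))))
        = (\<Sum>k\<in>{1..K}. p k * (s2 * \<sigma>2 k / (2 * sqrt (pi * (\<sigma>2 k + \<eta>2)))) * q s1)"
      by (simp add: mult_ac)
    also have "\<dots> = C * (s2 / sqrt 2) * (\<Sum>k\<in>{1..K}. p k * q s2 * q s1)"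
      using num_identity[OF psum, of s2 \<sigma>2 \<eta>2 s1] s by (simp add: C_def S_def)
    also have "\<dots> = C * (s2 / sqrt 2) * (\<Sum>k\<in>{1..K}. p k * q s1 * q s2)"
      by (simp add: mult_ac)
    finally show "(\<integral>x. E s1 s2 x * Im (h x) \<partial>M) = C * (s2 / sqrt 2) * (\<integral>x. E s1 s2 x \<partial>M)"
      using TI[OF s] TP[OF s] by simp
  next
    have "(\<lambda>x. C * (t2 x / sqrt 2)) = (\<lambda>x. C * Im (R x))" by (simp add: ImR)
    also have "\<dots> \<in> borel_measurable F" by measurable
    finally show "(\<lambda>x. C * (t2 x / sqrt 2)) \<in> borel_measurable F" .
  qed
  have "AE x in M. complex_cond_exp M F h x = complex_of_real C * R x"
    using charRe charIm
  proof eventually_elim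
    case (elim x)
    then show ?case
      by (simp add: complex_cond_exp_def complex_eq_iff ReR ImR)
  qed
  then show ?thesis unfolding F_def R_def C_def .
qed


end
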